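(* Let $q\in\mathrm{prob}(\{0,1\}^2)$. The set $D:=\{(\pi_1,\chi^{(1)}_{1|1}):(\pi,\chi)\in\Theta_2,\ \mu(\pi,\chi)=q\}$ is nonempty and equals the set of all $(\mathrm{Pr},\mathrm{Se}_1)\in[0,1]^2$ satisfying $\mathrm{Pr}-q_{0+}\le\mathrm{Pr}\,\mathrm{Se}_1\le q_{1+}$.
   Context: A subscript $+$ denotes summation over the replaced index: $q_{0+}=q_{00}+q_{01}$, $q_{1+}=q_{10}+q_{11}$. $\mathrm{prob}(\mathcal{X})$ is the set of probability densities on a finite set $\mathcal{X}$; $\mathrm{markov}(\mathcal{X},\mathcal{Y})$ the set of maps $(x,y)\mapsto p_{y|x}$ with $p_{\cdot|x}\in\mathrm{prob}(\mathcal{Y})$. $\Theta_2:=\mathrm{prob}(\{0,1\})\times\mathrm{markov}(\{0,1\},\{0,1\}^2)$, $\mu(\pi,\chi)_j:=\sum_{i=0}^1\pi_i\chi_{j|i}$ for $j\in\{0,1\}^2$, $\chi^{(1)}_{\iota|i}:=\chi_{\iota0|i}+\chi_{\iota1|i}$. *)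

theory Defs
  imports Main Complex_Main
begin

definition prob_dens :: "'a set \<Rightarrow> ('a \<Rightarrow> real) \<Rightarrow> bool" where
  "prob_dens X p \<longleftrightarrow> (\<forall>x\<in>X. 0 \<le> p x) \<and> (\<Sum>x\<in>X. p x) = 1"

text \<open>markov(X,Y): maps (x,y) to p_{y|x}, written chi x y, with chi x in prob(Y) for x in X.\<close>
definition markov :: "'a set \<Rightarrow> 'b set \<Rightarrow> ('a \<Rightarrow> 'b \<Rightarrow> real) \<Rightarrow> bool" where
  "markov X Y chi \<longleftrightarrow> (\<forall>x\<in>X. prob_dens Y (chi x))"

abbreviation B01 :: "nat set" where "B01 \<equiv> {0, 1}"

definition Theta2 :: "((nat \<Rightarrow> real) \<times> (nat \<Rightarrow> nat \<times> nat \<Rightarrow> real)) set" where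
  "Theta2 = {(pr, chi). prob_dens B01 pr \<and> markov B01 (B01 \<times> B01) chi}"

definition mu :: "(nat \<Rightarrow> real) \<Rightarrow> (nat \<Rightarrow> nat \<times> nat \<Rightarrow> real) \<Rightarrow> nat \<times> nat \<Rightarrow> real" where
  "mu pr chi j = (\<Sum>i\<in>B01. pr i * chi i j)"

text \<open>chi1 chi iota i = chi^{(1)}_{iota|i} = chi_{iota 0|i} + chi_{iota 1|i}\<close>
definition chi1 :: "(nat \<Rightarrow> nat \<times> nat \<Rightarrow> real) \<Rightarrow> nat \<Rightarrow> nat \<Rightarrow> real" where
  "chi1 chi iota i = chi i (iota, 0) + chi i (iota, 1)"

end

theory Submission
  imports Defs
begin

lemma sum4: "(\<Sum>j\<in>B01 \<times> B01. f j) = f (0,0) + f (0,1) + f (1,0) + (f (1,1)::real)"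
proof -
  have "B01 \<times> B01 = {(0,0),(0,1),(1,0),(1::nat,1::nat)}" by auto
  then show ?thesis by simp
qed

lemma sum2: "(\<Sum>i\<in>B01. f i) = f 0 + (f 1 :: real)" by simp

lemma fwd:
  assumes q: "prob_dens (B01 \<times> B01) q"
    and th: "(pr, chi) \<in> Theta2" and m: "\<forall>j\<in>B01 \<times> B01. mu pr chi j = q j"
  shows "pr 1 \<in> {0..1} \<and> chi1 chi 1 1 \<in> {0..1} \<and>
         pr 1 - (q (0,0) + q (0,1)) \<le> pr 1 * chi1 chi 1 1 \<and> pr 1 * chi1 chi 1 1 \<le> q (1,0) + q (1,1)"
proof -
  from q have qs: "q (0,0) + q (0,1) + q (1,0) + q (1,1) = 1"
    unfolding prob_dens_def sum4 by simp
  from th have p0: "pr 0 \<ge> 0" "pr 1 \<ge> 0" "pr 0 + pr 1 = 1"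
    unfolding Theta2_def prob_dens_def by auto
  from th have c: "\<And>i k l. i \<in> B01 \<Longrightarrow> k \<in> B01 \<Longrightarrow> l \<in> B01 \<Longrightarrow> chi i (k,l) \<ge> 0"
    "\<And>i. i \<in> B01 \<Longrightarrow> chi i (0,0) + chi i (0,1) + chi i (1,0) + chi i (1,1) = 1"
    unfolding Theta2_def markov_def prob_dens_def sum4 by auto
  have e10: "pr 0 * chi 0 (1,0) + pr 1 * chi 1 (1,0) = q (1,0)"
    using m unfolding mu_def by auto
  have e11: "pr 0 * chi 0 (1,1) + pr 1 * chi 1 (1,1) = q (1,1)"
    using m unfolding mu_def by auto
  define S where "S = chi1 chi 1 1"
  define T where "T = chi1 chi 1 0"
  have S: "S = chi 1 (1,0) + chi 1 (1,1)" unfolding S_def chi1_def by simp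
  have T: "T = chi 0 (1,0) + chi 0 (1,1)" unfolding T_def chi1_def by simp
  have c1: "chi 1 (0,0) \<ge> 0" "chi 1 (0,1) \<ge> 0" "chi 1 (1,0) \<ge> 0" "chi 1 (1,1) \<ge> 0"
    "chi 1 (0,0) + chi 1 (0,1) + chi 1 (1,0) + chi 1 (1,1) = 1" using c[of 1] by simp_all
  have c0: "chi 0 (0,0) \<ge> 0" "chi 0 (0,1) \<ge> 0" "chi 0 (1,0) \<ge> 0" "chi 0 (1,1) \<ge> 0"
    "chi 0 (0,0) + chi 0 (0,1) + chi 0 (1,0) + chi 0 (1,1) = 1" using c[of 0] by simp_all
  have S01: "0 \<le> S" "S \<le> 1" using c1 unfolding S by linarith+
  have T01: "0 \<le> T" "T \<le> 1" using c0 unfolding T by linarith+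
  have eq: "pr 0 * T + pr 1 * S = q (1,0) + q (1,1)"
    using e10 e11 unfolding S T by (simp add: algebra_simps)
  have "pr 0 * T \<ge> 0" using p0 T01 by simp
  moreover have "pr 0 * T \<le> pr 0" using mult_left_le[OF T01(2) p0(1)] .
  ultimately have "pr 1 - (q (0,0) + q (0,1)) \<le> pr 1 * S" "pr 1 * S \<le> q (1,0) + q (1,1)"
    using eq p0 qs by linarith+
  moreover have "pr 1 \<in> {0..1}" using p0 by simp
  moreover have "S \<in> {0..1}" using S01 by simp
  ultimately show ?thesis unfolding S_def by blast
qed

theorem lemma6:
  fixes q :: "nat \<times> nat \<Rightarrow> real"
  assumes "prob_dens (B01 \<times> B01) q"
  defines "D \<equiv> {(pr 1, chi1 chi 1 1) | pr chi.
                  (pr, chi) \<in> Theta2 \<and> (\<forall>j\<in>B01 \<times> B01. mu pr chi j = q j)}"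
  shows "D \<noteq> {} \<and>
         D = {(Pr, Se1). Pr \<in> {0..1} \<and> Se1 \<in> {0..1} \<and>
                Pr - (q (0,0) + q (0,1)) \<le> Pr * Se1 \<and> Pr * Se1 \<le> q (1,0) + q (1,1)}"
proof -
  let ?R = "{(Pr, Se1). Pr \<in> {0..1} \<and> Se1 \<in> {0..1} \<and>
                Pr - (q (0,0) + q (0,1)) \<le> Pr * Se1 \<and> Pr * Se1 \<le> q (1,0) + q (1,1)}"
  define a where "a = q (0,0) + q (0,1)"
  define b where "b = q (1,0) + q (1,1)"
  from assms(1) have qs: "a + b = 1" and qn: "\<And>k l. k \<in> B01 \<Longrightarrow> l \<in> B01 \<Longrightarrow> q (k,l) \<ge> 0"
    unfolding prob_dens_def sum4 a_def b_def by auto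
  have sub1: "D \<subseteq> ?R"
  proof
    fix x assume "x \<in> D"
    then obtain pr chi where x: "x = (pr 1, chi1 chi 1 1)" and th: "(pr, chi) \<in> Theta2"
      and m: "\<forall>j\<in>B01 \<times> B01. mu pr chi j = q j" unfolding D_def by blast
    show "x \<in> ?R" unfolding x mem_Collect_eq case_prod_conv by (rule fwd[OF assms(1) th m])
  qed
  have sub2: "?R \<subseteq> D"
  proof
    fix x assume "x \<in> ?R"
    then obtain P S where x: "x = (P, S)" and P: "0 \<le> P" "P \<le> 1" and S: "0 \<le> S" "S \<le> 1"
      and i1: "P - a \<le> P * S" and i2: "P * S \<le> b" unfolding a_def b_def by auto
    define w where "w = (\<lambda>(k::nat, l::nat). let s = q (k,0) + q (k,1) in if s = 0 then 1/2 else q (k,l) / s)"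
    define r where "r = (\<lambda>i::nat. \<lambda>k::nat. if i = 1 then (if k = 1 then S else 1 - S)
                     else (if k = 1 then (b - P*S)/(1-P) else 1 - (b - P*S)/(1-P)))"
    define pr where "pr = (\<lambda>i::nat. if i = 1 then P else 1 - P)"
    define chi where "chi = (\<lambda>i (k,l). r i k * w (k,l))"
    have rr: "0 \<le> (b - P*S)/(1-P)" "(b - P*S)/(1-P) \<le> 1"
    proof -
      show "0 \<le> (b - P*S)/(1-P)" using i2 P by simp
      show "(b - P*S)/(1-P) \<le> 1"
      proof (cases "P = 1")
        case False then show ?thesis using P i1 qs by (simp add: divide_le_eq)
      qed simp
    qed
    have w0: "\<And>k l. k \<in> B01 \<Longrightarrow> l \<in> B01 \<Longrightarrow> w (k,l) \<ge> 0"
      unfolding w_def Let_def using qn by (auto intro!: divide_nonneg_nonneg add_nonneg_nonneg)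
    have ws: "\<And>k. k \<in> B01 \<Longrightarrow> w (k,0) + w (k,1) = 1"
      unfolding w_def Let_def by (auto simp: add_divide_distrib[symmetric])
    have wq: "\<And>k l. k \<in> B01 \<Longrightarrow> l \<in> B01 \<Longrightarrow> (q (k,0) + q (k,1)) * w (k,l) = q (k,l)"
    proof -
      fix k l assume k: "k \<in> B01" and l: "l \<in> B01"
      show "(q (k,0) + q (k,1)) * w (k,l) = q (k,l)"
      proof (cases "q (k,0) + q (k,1) = 0")
        case True
        then have "q (k,0) = 0" "q (k,1) = 0" using qn[OF k, of 0] qn[OF k, of 1] by auto
        then show ?thesis using True l by auto
      next
        case False then show ?thesis unfolding w_def Let_def by auto
      qed
    qed
    have rsum: "\<And>k. k \<in> B01 \<Longrightarrow> P * r 1 k + (1 - P) * r 0 k = q (k,0) + q (k,1)"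
    proof -
      fix k :: nat assume k: "k \<in> B01"
      show "P * r 1 k + (1 - P) * r 0 k = q (k,0) + q (k,1)"
      proof (cases "P = 1")
        case True
        then have "S = b" using i1 i2 qs by auto
        then show ?thesis using True k qs unfolding r_def a_def b_def by auto
      next
        case False
        then have "1 - P \<noteq> 0" by simp
        then have d: "(1 - P) * ((b - P*S)/(1-P)) = b - P*S" by simp
        have "k = 0 \<or> k = 1" using k by auto
        then show ?thesis
        proof
          assume "k = 0" then show ?thesis using d qs unfolding r_def a_def b_def
            by (simp add: right_diff_distrib)
        next
          assume "k = 1" then show ?thesis using d unfolding r_def b_def by simp
        qed
      qed
    qed
    have th: "(pr, chi) \<in> Theta2"
      unfolding Theta2_def markov_def prob_dens_def
    proof (intro CollectI case_prodI conjI ballI)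
      show "\<And>x. x \<in> B01 \<Longrightarrow> 0 \<le> pr x" unfolding pr_def using P by auto
      show "sum pr B01 = 1" unfolding pr_def by simp
      fix i assume i: "i \<in> B01"
      have r0: "\<And>k. 0 \<le> r i k" unfolding r_def using S rr by auto
      show "\<And>x. x \<in> B01 \<times> B01 \<Longrightarrow> 0 \<le> chi i x"
        unfolding chi_def using r0 w0 by auto
      have "r i 0 + r i 1 = 1" unfolding r_def by auto
      then show "(\<Sum>x\<in>B01 \<times> B01. chi i x) = 1"
      proof -
        have "(\<Sum>x\<in>B01 \<times> B01. chi i x) = r i 0 * (w (0,0) + w (0,1)) + r i 1 * (w (1,0) + w (1,1))"
          unfolding sum4 chi_def by (simp add: distrib_left)
        also have "\<dots> = r i 0 + r i 1" using ws[of 0] ws[of 1] by simp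
        finally show ?thesis using \<open>r i 0 + r i 1 = 1\<close> by simp
      qed
    qed
    have m: "\<forall>j\<in>B01 \<times> B01. mu pr chi j = q j"
    proof
      fix j assume j: "j \<in> B01 \<times> B01"
      obtain k l where kl: "j = (k,l)" "k \<in> B01" "l \<in> B01" using j by auto
      have "mu pr chi j = (P * r 1 k + (1 - P) * r 0 k) * w (k,l)"
        unfolding mu_def pr_def chi_def kl by (simp add: algebra_simps)
      also have "\<dots> = q j" using rsum[OF kl(2)] wq[OF kl(2,3)] kl by simp
      finally show "mu pr chi j = q j" .
    qed
    have "chi1 chi 1 1 = r 1 1 * (w (1,0) + w (1,1))" unfolding chi1_def chi_def by (simp add: distrib_left)
    also have "\<dots> = S" using ws[of 1] unfolding r_def by simp
    finally have "chi1 chi 1 1 = S" .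
    moreover have "pr 1 = P" unfolding pr_def by simp
    ultimately have "(P, S) = (pr 1, chi1 chi 1 1)" by simp
    then show "x \<in> D" unfolding D_def x
      by (intro CollectI exI[of _ pr] exI[of _ chi] conjI th m)
  qed
  have "q (0,0) \<ge> 0" "q (0,1) \<ge> 0" "q (1,0) \<ge> 0" "q (1,1) \<ge> 0" using qn by auto
  then have "0 \<le> b" "b \<le> 1" "b - a \<le> b" using qs unfolding a_def b_def by linarith+
  then have h: "b \<in> {0..1}" "(1::real) \<in> {0..1}" "b - (q (0,0) + q (0,1)) \<le> b * 1" "b * 1 \<le> q (1,0) + q (1,1)"
    unfolding a_def b_def by simp_all
  have "(b, 1) \<in> ?R" unfolding mem_Collect_eq case_prod_conv using h by blast
  then have "(b, 1) \<in> D" using sub2 by (rule subsetD[rotated])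
  then have "D \<noteq> {}" by blast
  moreover have "D = ?R" using sub1 sub2 by (rule equalityI)
  ultimately show ?thesis by (rule conjI)
qed

end
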